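(* Let $A=(a_{ij})\in\mathcal{B}^{m,n}$ and let $k$ be a field. Let $k[A]=k[x_{ij} : a_{ij}=1]$, let $A[x]$ be the matrix over $k[A]$ with $A[x]_{ij}=x_{ij}$ if $a_{ij}=1$ and $0$ otherwise, and let $I_2(A[x])$ be the ideal of $k[A]$ generated by the $2\times2$ minors of $A[x]$. Let $\Delta_A$ be the simplicial complex on the vertex set $\{a_{ij} : a_{ij}=1\}$ whose faces are the isolated sets of $A$, and let $I_{\Delta_A}\subseteq k[A]$ be its Stanley–Reisner ideal, i.e. the ideal generated by the monomials $\prod_{a_{ij}\in S}x_{ij}$ for all subsets $S$ of the vertices with $S\notin\Delta_A$. Then \[ I_{\Delta_A}=\big(x_{ij}x_{k\ell} : (i,j)\neq(k,\ell),\ a_{ij}=a_{k\ell}=1,\ x_{ij}x_{k\ell}\notin I_2(A[x])\big). \]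
   Context: $\mathcal{B}^{m,n}$ denotes $m\times n$ matrices with entries in the Boolean semiring $\{0,1\}$ with $\vee$ (or), $\wedge$ (and). A pair of entries $\{a_{ij},a_{k\ell}\}$ is isolated if $a_{ij}=a_{k\ell}=1$ and $a_{i\ell}\wedge a_{kj}=0$. A subset $T$ of the entries of $A$ equal to $1$ is an isolated set if it has size one or every pair of its elements is isolated (the empty set is also a face of $\Delta_A$). *)

theory Defs
  imports Main "HOL-Library.Poly_Mapping"
begin

text \<open>Boolean m x n matrices are represented by A :: nat => nat => bool, with
  entries A i j for i < m, j < n (A i j = True means a_ij = 1).\<close>

type_synonym 'k mpoly = "((nat \<times> nat) \<Rightarrow>\<^sub>0 nat) \<Rightarrow>\<^sub>0 'k"

definition ones :: "nat \<Rightarrow> nat \<Rightarrow> (nat \<Rightarrow> nat \<Rightarrow> bool) \<Rightarrow> (nat \<times> nat) set" where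
  "ones m n A = {(i, j). i < m \<and> j < n \<and> A i j}"

definition isolated_pair :: "(nat \<Rightarrow> nat \<Rightarrow> bool) \<Rightarrow> nat \<times> nat \<Rightarrow> nat \<times> nat \<Rightarrow> bool" where
  "isolated_pair A p q = (case p of (i, j) \<Rightarrow> case q of (k, l) \<Rightarrow>
      A i j \<and> A k l \<and> \<not> (A i l \<and> A k j))"

definition isolated_set :: "nat \<Rightarrow> nat \<Rightarrow> (nat \<Rightarrow> nat \<Rightarrow> bool) \<Rightarrow> (nat \<times> nat) set \<Rightarrow> bool" where
  "isolated_set m n A T = (T \<subseteq> ones m n A \<and>
      (card T \<le> 1 \<or> (\<forall>p\<in>T. \<forall>q\<in>T. p \<noteq> q \<longrightarrow> isolated_pair A p q)))"

definition Var :: "nat \<times> nat \<Rightarrow> 'k::comm_ring_1 mpoly" where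
  "Var v = Poly_Mapping.single (Poly_Mapping.single v 1) 1"

definition kA :: "nat \<Rightarrow> nat \<Rightarrow> (nat \<Rightarrow> nat \<Rightarrow> bool) \<Rightarrow> 'k::comm_ring_1 mpoly set" where
  "kA m n A = {p. \<forall>mon \<in> Poly_Mapping.keys p. Poly_Mapping.keys mon \<subseteq> ones m n A}"

definition ideal_gen_in :: "'a::comm_ring_1 set \<Rightarrow> 'a set \<Rightarrow> 'a set" where
  "ideal_gen_in R G = {\<Sum>g\<in>F. c g * g | F c. finite F \<and> F \<subseteq> G \<and> (\<forall>g\<in>F. c g \<in> R)}"

definition Ax :: "(nat \<Rightarrow> nat \<Rightarrow> bool) \<Rightarrow> nat \<Rightarrow> nat \<Rightarrow> 'k::comm_ring_1 mpoly" where
  "Ax A i j = (if A i j then Var (i, j) else 0)"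

definition minors2 :: "nat \<Rightarrow> nat \<Rightarrow> (nat \<Rightarrow> nat \<Rightarrow> bool) \<Rightarrow> 'k::comm_ring_1 mpoly set" where
  "minors2 m n A = {Ax A i j * Ax A k l - Ax A i l * Ax A k j | i j k l.
      i < k \<and> k < m \<and> j < l \<and> l < n}"

definition I2 :: "nat \<Rightarrow> nat \<Rightarrow> (nat \<Rightarrow> nat \<Rightarrow> bool) \<Rightarrow> 'k::comm_ring_1 mpoly set" where
  "I2 m n A = ideal_gen_in (kA m n A) (minors2 m n A)"

definition SR_ideal :: "nat \<Rightarrow> nat \<Rightarrow> (nat \<Rightarrow> nat \<Rightarrow> bool) \<Rightarrow> 'k::comm_ring_1 mpoly set" where
  "SR_ideal m n A = ideal_gen_in (kA m n A)
     {\<Prod>s\<in>S. Var s | S. S \<subseteq> ones m n A \<and> \<not> isolated_set m n A S}"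

end

theory Submission imports Defs begin

definition wt :: "(nat \<times> nat) set \<Rightarrow> ((nat \<times> nat) \<Rightarrow>\<^sub>0 nat) \<Rightarrow> 'k::comm_ring_1" where
  "wt T M = (if Poly_Mapping.keys M \<subseteq> T then 1 else 0)"

definition ev :: "(nat \<times> nat) set \<Rightarrow> 'k::comm_ring_1 mpoly \<Rightarrow> 'k" where
  "ev T f = (\<Sum>M\<in>Poly_Mapping.keys f. Poly_Mapping.lookup f M * wt T M)"

lemma keys_add_nat: "Poly_Mapping.keys (a + b :: 'x \<Rightarrow>\<^sub>0 nat) = Poly_Mapping.keys a \<union> Poly_Mapping.keys b"
  by (auto simp: in_keys_iff lookup_add)

lemma wt_add: "wt T (a + b) = (wt T a * wt T b :: 'k::comm_ring_1)"
  by (auto simp: wt_def keys_add_nat)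

lemma ev_add: "ev T (f + g) = ev T f + ev T g"
  unfolding ev_def
  by (rule setsum_keys_plus_distrib) (auto simp: algebra_simps)

lemma ev_zero[simp]: "ev T 0 = 0" by (simp add: ev_def)

lemma ev_single: "ev T (Poly_Mapping.single M c) = c * wt T M"
  by (cases "c = 0") (auto simp: ev_def)

lemma ev_sum: "ev T (sum h A) = (\<Sum>a\<in>A. ev T (h a))"
  by (induction A rule: infinite_finite_induct) (auto simp: ev_add)

lemma decomp: "f = (\<Sum>M\<in>Poly_Mapping.keys f. Poly_Mapping.single M (Poly_Mapping.lookup f M))"
  by (rule poly_mapping_eqI)
     (auto simp: lookup_sum lookup_single when_def in_keys_iff sum.delta' split: if_splits)

lemma ev_mult: "ev T (f * g) = ev T f * (ev T g :: 'k::comm_ring_1)"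
proof -
  let ?F = "Poly_Mapping.keys f" and ?G = "Poly_Mapping.keys g"
  have "f * g = (\<Sum>a\<in>?F. Poly_Mapping.single a (Poly_Mapping.lookup f a)) *
               (\<Sum>b\<in>?G. Poly_Mapping.single b (Poly_Mapping.lookup g b))"
    using decomp[of f] decomp[of g] by simp
  also have "\<dots> = (\<Sum>a\<in>?F. \<Sum>b\<in>?G. Poly_Mapping.single (a + b) (Poly_Mapping.lookup f a * Poly_Mapping.lookup g b))"
    by (simp add: sum_product mult_single)
  finally have "ev T (f * g) = (\<Sum>a\<in>?F. \<Sum>b\<in>?G. (Poly_Mapping.lookup f a * wt T a) * (Poly_Mapping.lookup g b * wt T b))"
    by (simp add: ev_sum ev_single wt_add algebra_simps)
  also have "\<dots> = ev T f * ev T g"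
    by (simp add: ev_def sum_product)
  finally show ?thesis .
qed

lemma ev_diff: "ev T (f - g) = ev T f - (ev T g :: 'k::comm_ring_1)"
proof -
  have "ev T f = ev T ((f - g) + g)" by simp
  also have "\<dots> = ev T (f - g) + ev T g" by (rule ev_add)
  finally show ?thesis by simp
qed

lemma ev_Var: "ev T (Var s :: 'k::comm_ring_1 mpoly) = (if s \<in> T then 1 else 0)"
  by (simp add: Var_def ev_single wt_def)


lemma kA_zero: "0 \<in> kA m n A" by (simp add: kA_def)
lemma kA_one: "1 \<in> kA m n A" by (simp add: kA_def)
lemma kA_add: "p \<in> kA m n A \<Longrightarrow> q \<in> kA m n A \<Longrightarrow> p + q \<in> kA m n A"
  unfolding kA_def
proof (intro CollectI ballI)
  fix mon assume p: "p \<in> {p. \<forall>mon\<in>Poly_Mapping.keys p. Poly_Mapping.keys mon \<subseteq> ones m n A}"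
    and q: "q \<in> {p. \<forall>mon\<in>Poly_Mapping.keys p. Poly_Mapping.keys mon \<subseteq> ones m n A}"
    and mon: "mon \<in> Poly_Mapping.keys (p + q)"
  from mon have "mon \<in> Poly_Mapping.keys p \<or> mon \<in> Poly_Mapping.keys q"
    using keys_add[of p q] by (auto)
  then show "Poly_Mapping.keys mon \<subseteq> ones m n A" using p q by auto
qed
lemma kA_uminus: "p \<in> kA m n A \<Longrightarrow> - p \<in> kA m n A"
  unfolding kA_def by (auto simp: in_keys_iff)
lemma kA_mult: "p \<in> kA m n A \<Longrightarrow> q \<in> kA m n A \<Longrightarrow> p * q \<in> kA m n A"
  unfolding kA_def
proof (intro CollectI ballI)
  fix mon assume p: "p \<in> {p. \<forall>mon\<in>Poly_Mapping.keys p. Poly_Mapping.keys mon \<subseteq> ones m n A}"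
    and q: "q \<in> {p. \<forall>mon\<in>Poly_Mapping.keys p. Poly_Mapping.keys mon \<subseteq> ones m n A}"
    and mon: "mon \<in> Poly_Mapping.keys (p * q)"
  from mon obtain a b where "mon = a + b" "a \<in> Poly_Mapping.keys p" "b \<in> Poly_Mapping.keys q"
    using keys_mult[of p q] by blast
  then show "Poly_Mapping.keys mon \<subseteq> ones m n A" using p q by (simp add: keys_add_nat)
qed
lemma kA_Var: "s \<in> ones m n A \<Longrightarrow> (Var s :: 'k::comm_ring_1 mpoly) \<in> kA m n A"
  by (simp add: kA_def Var_def)
lemma kA_prod: "(\<And>s. s \<in> S \<Longrightarrow> f s \<in> kA m n A) \<Longrightarrow> prod f S \<in> kA m n A"
  by (induction S rule: infinite_finite_induct) (auto simp: kA_one kA_mult)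

lemma ideal_zero: "0 \<in> ideal_gen_in R G"
  unfolding ideal_gen_in_def mem_Collect_eq
  apply (rule exI[where x="{}"], rule exI[where x="\<lambda>_. 0"])
  by simp

lemma ideal_gen: "1 \<in> R \<Longrightarrow> g \<in> G \<Longrightarrow> g \<in> ideal_gen_in R G"
  unfolding ideal_gen_in_def mem_Collect_eq
  apply (rule exI[where x="{g}"], rule exI[where x="\<lambda>_. 1"])
  by simp

lemma ideal_add:
  assumes "0 \<in> R" "\<And>a b. a \<in> R \<Longrightarrow> b \<in> R \<Longrightarrow> a + b \<in> R"
    and "x \<in> ideal_gen_in R G" "y \<in> ideal_gen_in R G"
  shows "x + y \<in> ideal_gen_in R G"
proof -
  obtain F1 c1 where 1: "x = (\<Sum>g\<in>F1. c1 g * g)" "finite F1" "F1 \<subseteq> G" "\<forall>g\<in>F1. c1 g \<in> R"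
    using assms(3) unfolding ideal_gen_in_def by blast
  obtain F2 c2 where 2: "y = (\<Sum>g\<in>F2. c2 g * g)" "finite F2" "F2 \<subseteq> G" "\<forall>g\<in>F2. c2 g \<in> R"
    using assms(4) unfolding ideal_gen_in_def by blast
  define c where "c g = (if g \<in> F1 then c1 g else 0) + (if g \<in> F2 then c2 g else 0)" for g
  have "(\<Sum>g\<in>F1 \<union> F2. c g * g) = (\<Sum>g\<in>F1 \<union> F2. (if g \<in> F1 then c1 g * g else 0))
        + (\<Sum>g\<in>F1 \<union> F2. (if g \<in> F2 then c2 g * g else 0))"
    unfolding sum.distrib[symmetric] by (rule sum.cong) (auto simp: c_def distrib_right)
  also have "\<dots> = x + y"
  proof -
    have e1: "(F1 \<union> F2) \<inter> {g. g \<in> F1} = F1" "(F1 \<union> F2) \<inter> {g. g \<in> F2} = F2" by blast+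
    show ?thesis using 1 2 by (simp add: sum.If_cases[OF finite_UnI[OF 1(2) 2(2)]] e1)
  qed
  finally have "x + y = (\<Sum>g\<in>F1 \<union> F2. c g * g)" by simp
  moreover have "\<forall>g\<in>F1 \<union> F2. c g \<in> R" using 1 2 assms(1,2) unfolding c_def by auto
  ultimately show ?thesis using 1 2 unfolding ideal_gen_in_def mem_Collect_eq
    apply - apply (rule exI[where x="F1 \<union> F2"], rule exI[where x=c]) by simp
qed

lemma ideal_smult:
  assumes "\<And>a b. a \<in> R \<Longrightarrow> b \<in> R \<Longrightarrow> a * b \<in> R" "r \<in> R" "x \<in> ideal_gen_in R G"
  shows "r * x \<in> ideal_gen_in R G"
proof -
  obtain F c where 1: "x = (\<Sum>g\<in>F. c g * g)" "finite F" "F \<subseteq> G" "\<forall>g\<in>F. c g \<in> R"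
    using assms(3) unfolding ideal_gen_in_def by blast
  have "r * x = (\<Sum>g\<in>F. (r * c g) * g)" using 1 by (simp add: sum_distrib_left mult.assoc)
  moreover have "\<forall>g\<in>F. r * c g \<in> R" using 1 assms by auto
  ultimately show ?thesis using 1 unfolding ideal_gen_in_def mem_Collect_eq
    apply - apply (rule exI[where x="F"], rule exI[where x="\<lambda>g. r * c g"]) by simp
qed

lemma ideal_mono:
  assumes "0 \<in> R" "\<And>a b. a \<in> R \<Longrightarrow> b \<in> R \<Longrightarrow> a + b \<in> R" "\<And>a b. a \<in> R \<Longrightarrow> b \<in> R \<Longrightarrow> a * b \<in> R"
    and "G \<subseteq> ideal_gen_in R H"
  shows "ideal_gen_in R G \<subseteq> ideal_gen_in R H"
proof
  fix x assume "x \<in> ideal_gen_in R G"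
  then obtain F c where 1: "x = (\<Sum>g\<in>F. c g * g)" "finite F" "F \<subseteq> G" "\<forall>g\<in>F. c g \<in> R"
    unfolding ideal_gen_in_def by blast
  have "(\<Sum>g\<in>F. c g * g) \<in> ideal_gen_in R H" using 1(2-4)
  proof (induction F rule: finite_induct)
    case empty then show ?case by (simp add: ideal_zero)
  next
    case (insert a F)
    have a: "a \<in> ideal_gen_in R H" using insert.prems assms(4) by blast
    have "c a * a \<in> ideal_gen_in R H" using insert.prems by (intro ideal_smult[OF assms(3) _ a]) auto
    moreover have "(\<Sum>g\<in>F. c g * g) \<in> ideal_gen_in R H" using insert by blast
    ultimately show ?case using insert.hyps by (simp add: ideal_add[OF assms(1,2)])
  qed
  then show "x \<in> ideal_gen_in R H" using 1 by simp
qed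

lemma ideal_mono2: "G \<subseteq> H \<Longrightarrow> ideal_gen_in R G \<subseteq> ideal_gen_in R H"
  unfolding ideal_gen_in_def by blast


lemma minor_in: "i < k \<Longrightarrow> k < m \<Longrightarrow> j < l \<Longrightarrow> l < n \<Longrightarrow>
   Ax A i j * Ax A k l - Ax A i l * Ax A k j \<in> minors2 m n A"
  unfolding minors2_def by blast

lemma iso_in_I2:
  assumes p: "p \<in> ones m n A" and q: "q \<in> ones m n A" and iso: "isolated_pair A p q"
  shows "(Var p * Var q :: 'k::comm_ring_1 mpoly) \<in> I2 m n A"
proof -
  obtain i j where pij: "p = (i, j)" by (cases p)
  obtain k l where qkl: "q = (k, l)" by (cases q)
  have b: "i < m" "j < n" "k < m" "l < n" "A i j" "A k l" using p q pij qkl by (auto simp: ones_def)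
  have ni: "\<not> (A i l \<and> A k j)" using iso pij qkl by (simp add: isolated_pair_def)
  have ik: "i \<noteq> k" using ni b by auto
  have jl: "j \<noteq> l" using ni b by auto
  let ?V = "Var p * Var q :: 'k mpoly"
  have V: "?V = Var (i, j) * Var (k, l)" using pij qkl by simp
  have R: "\<And>a b :: 'k mpoly. a \<in> kA m n A \<Longrightarrow> b \<in> kA m n A \<Longrightarrow> a * b \<in> kA m n A" by (rule kA_mult)
  have m1: "(-1 :: 'k mpoly) \<in> kA m n A" using kA_uminus[OF kA_one] .
  have "?V \<in> minors2 m n A \<or> - ?V \<in> minors2 m n A"
  proof (cases "i < k")
    case True
    show ?thesis
    proof (cases "j < l")
      case True
      have "Ax A i j * Ax A k l - Ax A i l * Ax A k j \<in> minors2 m n A"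
        using minor_in[of i k m j l n A] \<open>i < k\<close> True b by simp
      then show ?thesis using ni b V by (auto simp: Ax_def)
    next
      case False
      then have "l < j" using jl by simp
      have "Ax A i l * Ax A k j - Ax A i j * Ax A k l \<in> minors2 m n A"
        using minor_in[of i k m l j n A] \<open>i < k\<close> \<open>l < j\<close> b by simp
      then show ?thesis using ni b V by (auto simp: Ax_def)
    qed
  next
    case False
    then have "k < i" using ik by simp
    show ?thesis
    proof (cases "j < l")
      case True
      have "Ax A k j * Ax A i l - Ax A k l * Ax A i j \<in> minors2 m n A"
        using minor_in[of k i m j l n A] \<open>k < i\<close> True b by simp
      then show ?thesis using ni b V by (auto simp: Ax_def mult.commute)
    next
      case False
      then have "l < j" using jl by simp
      have "Ax A k l * Ax A i j - Ax A k j * Ax A i l \<in> minors2 m n A"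
        using minor_in[of k i m l j n A] \<open>k < i\<close> \<open>l < j\<close> b by simp
      then show ?thesis using ni b V by (auto simp: Ax_def mult.commute)
    qed
  qed
  then show ?thesis
  proof
    assume "?V \<in> minors2 m n A"
    then show ?thesis unfolding I2_def by (rule ideal_gen[OF kA_one, rotated])
  next
    assume "- ?V \<in> minors2 m n A"
    then have "- ?V \<in> I2 m n A" unfolding I2_def by (rule ideal_gen[OF kA_one, rotated])
    then have "(-1) * (- ?V) \<in> I2 m n A"
      using ideal_smult[of "kA m n A" "-1" "- ?V" "minors2 m n A"] R m1 unfolding I2_def by blast
    then show ?thesis by simp
  qed
qed

lemma noniso_notin_I2:
  assumes p: "p \<in> ones m n A" and q: "q \<in> ones m n A" and iso: "\<not> isolated_pair A p q"
  shows "(Var p * Var q :: 'k::field mpoly) \<notin> I2 m n A"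
proof
  obtain i j where pij: "p = (i, j)" by (cases p)
  obtain k l where qkl: "q = (k, l)" by (cases q)
  have b: "A i j" "A k l" using p q pij qkl by (auto simp: ones_def)
  have ni: "A i l \<and> A k j" using iso pij qkl b by (simp add: isolated_pair_def)
  define T where "T = {i, k} \<times> {j, l}"
  have evAx: "ev T (Ax A a c :: 'k mpoly) = (if (a, c) \<in> T then 1 else 0)" for a c
    using b ni by (auto simp: Ax_def ev_Var T_def)
  have evg: "ev T (g :: 'k mpoly) = 0" if "g \<in> minors2 m n A" for g
  proof -
    from that obtain a c a' c' where "g = Ax A a c * Ax A a' c' - Ax A a c' * Ax A a' c"
      unfolding minors2_def by blast
    then have "ev T g = (if (a, c) \<in> T then 1 else 0) * (if (a', c') \<in> T then 1 else 0)
       - (if (a, c') \<in> T then 1 else 0) * (if (a', c) \<in> T then (1::'k) else 0)"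
      by (simp only: ev_diff ev_mult evAx)
    then show ?thesis by (auto simp: T_def)
  qed
  assume "(Var p * Var q :: 'k mpoly) \<in> I2 m n A"
  then obtain F c where 1: "(Var p * Var q :: 'k mpoly) = (\<Sum>g\<in>F. c g * g)" "F \<subseteq> minors2 m n A"
    unfolding I2_def ideal_gen_in_def by blast
  have "ev T (\<Sum>g\<in>F. c g * g) = 0"
    using 1(2) evg by (auto simp: ev_sum ev_mult intro!: sum.neutral)
  moreover have "ev T (Var p * Var q :: 'k mpoly) = 1"
    by (simp add: ev_mult ev_Var pij qkl T_def)
  ultimately show False using 1(1) by simp
qed


lemma finite_ones: "finite (ones m n A)"
proof -
  have "ones m n A \<subseteq> {..<m} \<times> {..<n}" by (auto simp: ones_def)
  then show ?thesis by (rule finite_subset) simp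
qed

theorem corollary4p15:
  fixes A :: "nat \<Rightarrow> nat \<Rightarrow> bool" and m n :: nat
  shows "(SR_ideal m n A :: 'k::field mpoly set) =
    ideal_gen_in (kA m n A)
      {Var p * Var q | p q. p \<noteq> q \<and> p \<in> ones m n A \<and> q \<in> ones m n A \<and>
          (Var p * Var q :: 'k mpoly) \<notin> I2 m n A}"
proof -
  let ?G1 = "{\<Prod>s\<in>S. Var s | S. S \<subseteq> ones m n A \<and> \<not> isolated_set m n A S} :: 'k mpoly set"
  let ?G2 = "{Var p * Var q | p q. p \<noteq> q \<and> p \<in> ones m n A \<and> q \<in> ones m n A \<and>
          (Var p * Var q :: 'k mpoly) \<notin> I2 m n A}"
  have Rz: "(0::'k mpoly) \<in> kA m n A" by (rule kA_zero)
  have Ra: "\<And>a b :: 'k mpoly. a \<in> kA m n A \<Longrightarrow> b \<in> kA m n A \<Longrightarrow> a + b \<in> kA m n A" by (rule kA_add)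
  have Rm: "\<And>a b :: 'k mpoly. a \<in> kA m n A \<Longrightarrow> b \<in> kA m n A \<Longrightarrow> a * b \<in> kA m n A" by (rule kA_mult)
  have "?G2 \<subseteq> ?G1"
  proof
    fix x :: "'k mpoly" assume "x \<in> ?G2"
    then obtain p q where x: "x = Var p * Var q" "p \<noteq> q" "p \<in> ones m n A" "q \<in> ones m n A"
        "(Var p * Var q :: 'k mpoly) \<notin> I2 m n A" by blast
    have ni: "\<not> isolated_pair A p q" using x iso_in_I2 by blast
    have "x = (\<Prod>s\<in>{p, q}. Var s)" using x by simp
    moreover have "{p, q} \<subseteq> ones m n A" using x by simp
    moreover have "\<not> isolated_set m n A {p, q}"
      using x ni by (auto simp: isolated_set_def)
    ultimately show "x \<in> ?G1" by blast
  qed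
  then have sup: "ideal_gen_in (kA m n A) ?G2 \<subseteq> ideal_gen_in (kA m n A) ?G1"
    by (rule ideal_mono2)
  have "?G1 \<subseteq> ideal_gen_in (kA m n A) ?G2"
  proof
    fix x :: "'k mpoly" assume "x \<in> ?G1"
    then obtain S where x: "x = (\<Prod>s\<in>S. Var s)" "S \<subseteq> ones m n A" "\<not> isolated_set m n A S"
      by blast
    from x(2,3) obtain p q where pq: "p \<in> S" "q \<in> S" "p \<noteq> q" "\<not> isolated_pair A p q"
      unfolding isolated_set_def by blast
    have fS: "finite S" using x(2) finite_ones finite_subset by blast
    have po: "p \<in> ones m n A" "q \<in> ones m n A" using pq x(2) by auto
    have "x = Var p * (\<Prod>s\<in>S - {p}. Var s)" using x(1) fS pq(1) by (simp add: prod.remove)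
    also have "(\<Prod>s\<in>S - {p}. Var s) = Var q * (\<Prod>s\<in>S - {p} - {q}. Var s)"
      using fS pq by (subst prod.remove[of _ q]) auto
    finally have xe: "x = (\<Prod>s\<in>S - {p} - {q}. Var s) * (Var p * Var q)" by (simp add: ac_simps)
    have r: "(\<Prod>s\<in>S - {p} - {q}. Var s) \<in> kA m n A"
      using x(2) by (intro kA_prod kA_Var) auto
    have "Var p * Var q \<in> ?G2"
      using pq po noniso_notin_I2[OF po pq(4)] by blast
    then have "Var p * Var q \<in> ideal_gen_in (kA m n A) ?G2"
      by (rule ideal_gen[OF kA_one])
    then show "x \<in> ideal_gen_in (kA m n A) ?G2"
      unfolding xe using ideal_smult[of "kA m n A" _ "Var p * Var q" ?G2] Rm r by blast
  qed
  then have sub: "ideal_gen_in (kA m n A) ?G1 \<subseteq> ideal_gen_in (kA m n A) ?G2"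
    using ideal_mono[of "kA m n A" ?G1 ?G2] Rz Ra Rm by blast
  show ?thesis unfolding SR_ideal_def using sub sup by blast
qed

end
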